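(* For every round $\ell\ge\lceil n/2\rceil$ of Algorithm 2 in which a tentative edge $e^{(\ell)}$ exists, the probability that $e^{(\ell)}$ is feasible, i.e. that the set of edges accepted before round $\ell$ together with $e^{(\ell)}$ is a matching, conditioned on $L^{\le\ell}$ and on $T^{\ge\ell+1}$, is at least $\frac{n/2-1}{\ell-1}$.
   Context: Submodular secretary matching setting. Let $G=(L\cup R,E)$ be a bipartite graph with $|L|=n$, and $v\colon 2^E\to\mathbb{R}_{\ge0}$ monotone and submodular. The vertices of $L$ arrive one per round in uniformly random order; on arrival of $u\in L$ its incident edges are revealed; $L^{\le\ell}$ denotes the set of vertices of $L$ arriving in rounds $1,\dots,\ell$. $\mathcal{A}$ is an offline algorithm that for every $L'\subseteq L$ returns a matching $\mathcal{A}(L'\cup R)$ of the subgraph induced by $L'\cup R$, depending only on the set $L'$. Algorithm 2: it rejects the vertices arriving in rounds $1,\dots,\lceil n/2\rceil-1$; in each round $\ell\ge\lceil n/2\rceil$ with arriving vertex $u$, it computes $M^{(\ell)}=\mathcal{A}(L^{\le\ell}\cup R)$, lets $e^{(\ell)}$ be the edge incident to $u$ in $M^{(\ell)}$ (the tentative edge; none if $u$ is unmatched), and if $e^{(\ell)}$ exists and the set of accepted edges together with $e^{(\ell)}$ is a matching, accepts $e^{(\ell)}$. $T^{\ge\ell}$ is the set of tentative edges of rounds $\ell,\dots,n$. *)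

theory Defs
  imports "HOL-Probability.Probability" "HOL-Combinatorics.Multiset_Permutations"
begin

definition is_matching :: "('l \<times> 'r) set \<Rightarrow> bool" where
  "is_matching M \<longleftrightarrow>
     (\<forall>e\<in>M. \<forall>e'\<in>M. e \<noteq> e' \<longrightarrow> fst e \<noteq> fst e' \<and> snd e \<noteq> snd e')"

text \<open>An arrival order is a list sigma enumerating L without repetition; the vertex arriving
  in round k (1-based) is sigma ! (k - 1), and L^{<= l} is set (take l sigma).\<close>
definition arrived :: "'l list \<Rightarrow> nat \<Rightarrow> 'l set" where
  "arrived \<sigma> l = set (take l \<sigma>)"

text \<open>Tentative edge of round l: the edge incident to the arriving vertex in A(L^{<= l} \<union> R).\<close>
definition tentative :: "('l set \<Rightarrow> ('l \<times> 'r) set) \<Rightarrow> 'l list \<Rightarrow> nat \<Rightarrow> ('l \<times> 'r) option" where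
  "tentative A \<sigma> l =
     (let u = \<sigma> ! (l - 1); M = A (arrived \<sigma> l) in
      if \<exists>r. (u, r) \<in> M then Some (u, THE r. (u, r) \<in> M) else None)"

definition start_round :: "nat \<Rightarrow> nat" where
  "start_round n = nat \<lceil>real n / 2\<rceil>"

fun accepted :: "('l set \<Rightarrow> ('l \<times> 'r) set) \<Rightarrow> 'l list \<Rightarrow> nat \<Rightarrow> ('l \<times> 'r) set" where
  "accepted A \<sigma> 0 = {}"
| "accepted A \<sigma> (Suc k) =
     (if Suc k < start_round (length \<sigma>) then accepted A \<sigma> k
      else (case tentative A \<sigma> (Suc k) of
              None \<Rightarrow> accepted A \<sigma> k
            | Some e \<Rightarrow> if is_matching (insert e (accepted A \<sigma> k))
                        then insert e (accepted A \<sigma> k) else accepted A \<sigma> k))"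

definition tentative_from :: "('l set \<Rightarrow> ('l \<times> 'r) set) \<Rightarrow> 'l list \<Rightarrow> nat \<Rightarrow> ('l \<times> 'r) set" where
  "tentative_from A \<sigma> l = {e. \<exists>k. l \<le> k \<and> k \<le> length \<sigma> \<and> tentative A \<sigma> k = Some e}"

definition feasible :: "('l set \<Rightarrow> ('l \<times> 'r) set) \<Rightarrow> 'l list \<Rightarrow> nat \<Rightarrow> bool" where
  "feasible A \<sigma> l \<longleftrightarrow>
     (\<exists>e. tentative A \<sigma> l = Some e \<and> is_matching (insert e (accepted A \<sigma> (l - 1))))"

end

theory Submission
  imports Defs
begin

definition goodp :: "nat \<Rightarrow> ('a set \<Rightarrow> 'a set) \<Rightarrow> 'a set \<Rightarrow> 'a list set" where
  "goodp s B X = {p \<in> permutations_of_set X. \<forall>k. s \<le> k \<and> k \<le> length p \<longrightarrow> p!(k-1) \<notin> B (set (take k p))}"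

lemma snoc_perm:
  assumes "q \<in> permutations_of_set (X - {x})" "x \<in> X"
  shows "q @ [x] \<in> permutations_of_set X"
  using assms by (auto simp: permutations_of_set_def)

lemma count_good:
  fixes B :: "'a set \<Rightarrow> 'a set" and s :: nat
  assumes "finite X" "\<And>Y a b. Y \<subseteq> X \<Longrightarrow> a \<in> B Y \<Longrightarrow> b \<in> B Y \<Longrightarrow> a = b"
    "s \<le> card X + 1" "1 \<le> s"
  shows "real (card (goodp s B X)) \<ge> (real s - 1) / real (card X) * fact (card X)"
  using assms
proof (induction "card X" arbitrary: X)
  case 0
  then have "X = {}" by auto
  then show ?case by simp
next
  case (Suc m X)
  show ?case
  proof (cases "s \<le> Suc m")
    case False
    then have s: "s = Suc m + 1" using Suc.prems Suc.hyps by simp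
    have "goodp s B X = permutations_of_set X"
      unfolding goodp_def using s Suc.hyps
      by (auto simp: length_finite_permutations_of_set)
    then show ?thesis using s Suc.hyps Suc.prems by simp
  next
    case True
    define D where "D = X - B X"
    have fin: "finite D" using Suc.prems D_def by auto
    have sub: "(\<Union>x\<in>D. (\<lambda>q. q @ [x]) ` goodp s B (X - {x})) \<subseteq> goodp s B X"
    proof
      fix p assume "p \<in> (\<Union>x\<in>D. (\<lambda>q. q @ [x]) ` goodp s B (X - {x}))"
      then obtain x q where x: "x \<in> D" and q: "q \<in> goodp s B (X - {x})" and p: "p = q @ [x]" by auto
      have qp: "q \<in> permutations_of_set (X - {x})" using q by (simp add: goodp_def)
      have pp: "p \<in> permutations_of_set X" using snoc_perm[OF qp] x p D_def by auto
      have lq: "length q = m" using qp Suc.hyps Suc.prems x D_def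
        by (auto simp: length_finite_permutations_of_set)
      have "\<forall>k. s \<le> k \<and> k \<le> length p \<longrightarrow> p!(k-1) \<notin> B (set (take k p))"
      proof (intro allI impI)
        fix k assume k: "s \<le> k \<and> k \<le> length p"
        show "p!(k-1) \<notin> B (set (take k p))"
        proof (cases "k \<le> length q")
          case True
          then have "p!(k-1) = q!(k-1)" "take k p = take k q" using k Suc.prems p
            by (auto simp: nth_append)
          then show ?thesis using q True k unfolding goodp_def by auto
        next
          case False
          then have "k = Suc (length q)" using k p by simp
          then have "p!(k-1) = x" "set (take k p) = X" using p pp
            by (auto simp: permutations_of_set_def)
          then show ?thesis using x D_def by auto
        qed
      qed
      then show "p \<in> goodp s B X" using pp by (simp add: goodp_def)
    qed
    have fing: "\<And>Y. finite (goodp s B Y)"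
      by (rule finite_subset[of _ "permutations_of_set _"]) (auto simp: goodp_def)
    have card_un: "card (\<Union>x\<in>D. (\<lambda>q. q @ [x]) ` goodp s B (X - {x})) = (\<Sum>x\<in>D. card (goodp s B (X - {x})))"
      apply (subst card_UN_disjoint[OF fin])
        apply (auto simp: fing)[2]
      apply (rule sum.cong, simp)
      apply (rule card_image)
      apply (auto simp: inj_on_def)
      done
    have IH: "real (card (goodp s B (X - {x}))) \<ge> (real s - 1) / real m * fact m" if "x \<in> D" for x
    proof -
      have c: "m = card (X - {x})" using that D_def Suc.hyps Suc.prems by auto
      have u: "\<And>Y a b. Y \<subseteq> X - {x} \<Longrightarrow> a \<in> B Y \<Longrightarrow> b \<in> B Y \<Longrightarrow> a = b"
        using Suc.prems(2) by blast
      show ?thesis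
        using Suc.hyps(1)[OF c _ u] c True Suc.prems by auto
    qed
    have cD: "card D \<ge> m"
    proof -
      have "card (X \<inter> B X) \<le> Suc 0"
        using Suc.prems(2)[of X] Suc.prems(1) by (subst card_le_Suc0_iff_eq) auto
      moreover have "card D = card X - card (X \<inter> B X)"
        unfolding D_def using Suc.prems by (simp add: card_Diff_subset_Int)
      ultimately show ?thesis using Suc.hyps by linarith
    qed
    have "real (card (goodp s B X)) \<ge> real (\<Sum>x\<in>D. card (goodp s B (X - {x})))"
      using card_mono[OF fing sub] card_un of_nat_le_iff by metis
    also have "real (\<Sum>x\<in>D. card (goodp s B (X - {x}))) \<ge> (\<Sum>x\<in>D. (real s - 1) / real m * fact m)"
      unfolding of_nat_sum by (rule sum_mono) (rule IH)
    finally have G: "real (card (goodp s B X)) \<ge> real (card D) * ((real s - 1) / real m * fact m)"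
      by simp
    show ?thesis
    proof (cases "m = 0")
      case True
      then have "s = 1" using Suc.prems \<open>s \<le> Suc m\<close> by simp
      then show ?thesis by simp
    next
      case False
      have "(real s - 1) / real (card X) * fact (card X) = (real s - 1) * fact m"
        using Suc.hyps(2)[symmetric] False by (simp add: field_simps)
      also have "\<dots> = real m * ((real s - 1) / real m * fact m)" using False by simp
      also have "\<dots> \<le> real (card D) * ((real s - 1) / real m * fact m)"
        apply (rule mult_right_mono) using cD Suc.prems by auto
      finally show ?thesis using G by linarith
    qed
  qed
qed

lemma tent_prefix:
  assumes "1 \<le> j" "j \<le> length p"
  shows "tentative A (p@q) j = tentative A (p@q') j"
proof -
  have "j - 1 < length p" using assms by simp
  then have "(p@q)!(j-1) = (p@q')!(j-1)" by (simp add: nth_append)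
  moreover have "arrived (p@q) j = arrived (p@q') j" using assms by (simp add: arrived_def)
  ultimately show ?thesis by (simp add: tentative_def)
qed

lemma tent_suffix:
  assumes "length p = length p'" "set p = set p'" "length p < j"
  shows "tentative A (p@q) j = tentative A (p'@q) j"
proof -
  have "\<not> j - 1 < length p" using assms by simp
  then have "(p@q)!(j-1) = (p'@q)!(j-1)" using assms by (simp add: nth_append)
  moreover have "arrived (p@q) j = arrived (p'@q) j" using assms by (simp add: arrived_def)
  ultimately show ?thesis by (simp add: tentative_def)
qed

lemma tfrom_suffix:
  assumes "length p = length p'" "set p = set p'"
  shows "tentative_from A (p@q) (length p + 1) = tentative_from A (p'@q) (length p + 1)"
  unfolding tentative_from_def using tent_suffix[OF assms] assms(1)
  by (metis (no_types, opaque_lifting) Suc_eq_plus1 Suc_le_eq length_append)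

lemma acc_prefix:
  assumes "k \<le> length p" "length q = length q'"
  shows "accepted A (p@q) k = accepted A (p@q') k"
  using assms
proof (induction k)
  case 0
  then show ?case by simp
next
  case (Suc k)
  have "tentative A (p@q) (Suc k) = tentative A (p@q') (Suc k)"
    using Suc.prems by (intro tent_prefix) auto
  moreover have "accepted A (p@q) k = accepted A (p@q') k" using Suc by simp
  ultimately show ?case using Suc.prems by (simp only: accepted.simps length_append)
qed

lemma feas_prefix:
  assumes "1 \<le> l" "l \<le> length p" "length q = length q'"
  shows "feasible A (p@q) l = feasible A (p@q') l"
  using tent_prefix[OF assms(1,2), of A q q'] acc_prefix[of "l-1" p q q' A] assms
  by (simp add: feasible_def)

lemma tent_some:
  assumes "tentative A \<sigma> j = Some e" "is_matching (A (arrived \<sigma> j))"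
  shows "e \<in> A (arrived \<sigma> j) \<and> fst e = \<sigma>!(j-1)"
proof -
  let ?u = "\<sigma>!(j-1)" and ?M = "A (arrived \<sigma> j)"
  from assms(1) obtain r where r: "(?u, r) \<in> ?M" and e: "e = (?u, THE r. (?u, r) \<in> ?M)"
    by (auto simp: tentative_def Let_def split: if_splits)
  have "(THE r. (?u, r) \<in> ?M) = r"
    apply (rule the_equality[where P="\<lambda>r. (?u, r) \<in> ?M", OF r])
    using assms(2) r unfolding is_matching_def by fastforce
  then show ?thesis using e r by simp
qed

lemma acc_struct:
  "is_matching (accepted A \<sigma> k) \<and>
   (\<forall>e\<in>accepted A \<sigma> k. \<exists>j. start_round (length \<sigma>) \<le> j \<and> 1 \<le> j \<and> j \<le> k \<and> tentative A \<sigma> j = Some e)"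
proof (induction k)
  case 0
  then show ?case by (simp add: is_matching_def)
next
  case (Suc k)
  have aux: "\<forall>e\<in>accepted A \<sigma> k. \<exists>j. start_round (length \<sigma>) \<le> j \<and> 1 \<le> j \<and> j \<le> Suc k \<and> tentative A \<sigma> j = Some e"
    using Suc.IH le_SucI by blast
  show ?case
  proof (cases "Suc k < start_round (length \<sigma>)")
    case True then show ?thesis using Suc.IH aux by simp
  next
    case False
    show ?thesis
    proof (cases "tentative A \<sigma> (Suc k)")
      case None then show ?thesis using Suc.IH aux False by simp
    next
      case (Some e)
      show ?thesis
      proof (cases "is_matching (insert e (accepted A \<sigma> k))")
        case True
        then have eq: "accepted A \<sigma> (Suc k) = insert e (accepted A \<sigma> k)"
          using Some False by simp
        have "\<exists>j. start_round (length \<sigma>) \<le> j \<and> 1 \<le> j \<and> j \<le> Suc k \<and> tentative A \<sigma> j = Some e"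
          using Some False by (intro exI[of _ "Suc k"]) auto
        then show ?thesis unfolding eq using True aux by auto
      next
        case F2: False
        then have eq: "accepted A \<sigma> (Suc k) = accepted A \<sigma> k"
          using Some False by simp
        show ?thesis unfolding eq using Suc.IH aux by auto
      qed
    qed
  qed
qed

lemma insert_matching:
  assumes "is_matching M" "\<forall>e\<in>M. fst e \<noteq> fst x \<and> snd e \<noteq> snd x"
  shows "is_matching (insert x M)"
  using assms unfolding is_matching_def by (metis insert_iff)

lemma prefix_bound:
  fixes L :: "'l set" and A :: "'l set \<Rightarrow> ('l \<times> 'r) set" and q0 :: "'l list"
  assumes finL: "finite L" and SL: "S \<subseteq> L" and cS: "card S = l" and l1: "1 \<le> l"
    and sl: "start_round n \<le> l" and lenq: "l + length q0 = n"
    and match: "\<And>L'. L' \<subseteq> L \<Longrightarrow> is_matching (A L')"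
  defines "PC \<equiv> {p \<in> permutations_of_set S. tentative A (p@q0) l \<noteq> None}"
  defines "PF \<equiv> {p \<in> PC. feasible A (p@q0) l}"
  shows "real (card PF) \<ge> (real (start_round n) - 1) / (real l - 1) * real (card PC)"
proof -
  define s where "s = start_round n"
  have s1: "1 \<le> s"
  proof -
    have "n \<ge> 1" using lenq l1 by simp
    then have "real n / 2 > 0" by simp
    then have "\<lceil>real n / 2\<rceil> \<ge> 1" by linarith
    then show ?thesis unfolding s_def start_round_def by linarith
  qed
  have finS: "finite S" using finL SL finite_subset by blast
  define U where "U = {u\<in>S. \<exists>r. (u,r) \<in> A S}"
  have finU: "finite U" using finS U_def by auto
  define ru where "ru u = (THE r. (u,r) \<in> A S)" for u
  define Bu where "Bu u Y = {v. (v, ru u) \<in> A Y}" for u Y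
  define G where "G u = goodp s (Bu u) (S - {u})" for u
  have cSu: "card (S - {u}) = l - 1" if "u \<in> S" for u using that cS finS by simp
  have l1r: "real l - 1 = real (l - 1)" using l1 by simp
  have PCsub: "PC \<subseteq> (\<Union>u\<in>U. (\<lambda>q. q @ [u]) ` permutations_of_set (S - {u}))"
  proof
    fix p assume p: "p \<in> PC"
    then have pS: "p \<in> permutations_of_set S" and t: "tentative A (p@q0) l \<noteq> None"
      unfolding PC_def by auto
    have lp: "length p = l" using pS cS by (simp add: length_finite_permutations_of_set)
    then have pne: "p \<noteq> []" using l1 by auto
    have pe: "p = butlast p @ [last p]" using pne by simp
    have "l - 1 < length p" using lp l1 by simp
    then have "(p@q0)!(l-1) = last p" using lp pne by (simp add: nth_append last_conv_nth)
    moreover have "arrived (p@q0) l = S" using lp pS by (simp add: arrived_def permutations_of_set_def)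
    ultimately have "\<exists>r. (last p, r) \<in> A S" using t by (auto simp: tentative_def Let_def split: if_splits)
    moreover have "last p \<in> S" using pS pne by (auto simp: permutations_of_set_def)
    ultimately have "last p \<in> U" unfolding U_def by auto
    moreover have "butlast p \<in> permutations_of_set (S - {last p})"
    proof -
      have d: "distinct (butlast p @ [last p])" using pS pe by (simp add: permutations_of_set_def)
      have st: "set (butlast p @ [last p]) = S" using pS pe by (simp add: permutations_of_set_def)
      show ?thesis using d st by (auto simp: permutations_of_set_def)
    qed
    ultimately show "p \<in> (\<Union>u\<in>U. (\<lambda>q. q @ [u]) ` permutations_of_set (S - {u}))"
      using pe by blast
  qed
  have cPC: "card PC \<le> card U * fact (l - 1)"
  proof -
    have "card PC \<le> card (\<Union>u\<in>U. (\<lambda>q. q @ [u]) ` permutations_of_set (S - {u}))"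
      by (rule card_mono[OF _ PCsub]) (simp add: finU)
    also have "\<dots> \<le> (\<Sum>u\<in>U. card ((\<lambda>q. q @ [u]) ` permutations_of_set (S - {u})))"
      by (rule card_UN_le[OF finU])
    also have "\<dots> \<le> (\<Sum>u\<in>U. fact (l - 1))"
    proof (rule sum_mono)
      fix u assume "u \<in> U"
      then have "card (permutations_of_set (S - {u})) = fact (l - 1)"
        using cSu[of u] finS U_def by simp
      then show "card ((\<lambda>q. q @ [u]) ` permutations_of_set (S - {u})) \<le> fact (l - 1)"
        by (metis card_image_le finite_permutations_of_set)
    qed
    finally show ?thesis by simp
  qed
  have GPF: "(\<lambda>q. q @ [u]) ` G u \<subseteq> PF" if uU: "u \<in> U" for u
  proof
    fix p assume "p \<in> (\<lambda>q. q @ [u]) ` G u"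
    then obtain p' where p'G: "p' \<in> G u" and p: "p = p' @ [u]" by auto
    have uS: "u \<in> S" using uU U_def by auto
    have p'P: "p' \<in> permutations_of_set (S - {u})" using p'G by (simp add: G_def goodp_def)
    have lp': "length p' = l - 1" using p'P cSu[OF uS] by (simp add: length_finite_permutations_of_set)
    have pP: "p \<in> permutations_of_set S" using snoc_perm[OF p'P uS] p by simp
    define \<sigma> where "\<sigma> = p @ q0"
    have lsig: "length \<sigma> = n" using \<sigma>_def p lp' lenq l1 by simp
    have su: "\<sigma>!(l-1) = u" using \<sigma>_def p lp' by (simp add: nth_append)
    have arrS: "arrived \<sigma> l = S" using \<sigma>_def pP p lp' l1
      by (simp add: arrived_def permutations_of_set_def)
    obtain r0 where r0: "(u, r0) \<in> A S" using uU U_def by auto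
    have ruu: "(u, ru u) \<in> A S"
    proof -
      have m: "is_matching (A S)" using match[OF SL] .
      have "x = r0" if "(u, x) \<in> A S" for x
      proof (rule ccontr)
        assume "x \<noteq> r0"
        then show False using bspec[OF bspec[OF m[unfolded is_matching_def] that] r0] by simp
      qed
      then show ?thesis unfolding ru_def using r0 by (metis theI)
    qed
    have tent: "tentative A \<sigma> l = Some (u, ru u)"
      unfolding tentative_def Let_def su arrS ru_def using r0 by auto
    define M where "M = accepted A \<sigma> (l - 1)"
    have Mm: "is_matching M" using acc_struct[of A \<sigma> "l-1"] M_def by simp
    have Mprop: "\<forall>e\<in>M. fst e \<noteq> fst (u, ru u) \<and> snd e \<noteq> snd (u, ru u)"
    proof
      fix e assume "e \<in> M"
      then obtain j where j: "s \<le> j" "1 \<le> j" "j \<le> l - 1" "tentative A \<sigma> j = Some e"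
        using acc_struct[of A \<sigma> "l-1"] M_def lsig s_def by auto
      have arrj: "arrived \<sigma> j = set (take j p')"
        using j lp' unfolding arrived_def \<sigma>_def p by simp
      have "set (take j p') \<subseteq> set p'" by (rule set_take_subset)
      also have "set p' = S - {u}" using p'P by (simp add: permutations_of_set_def)
      finally have "set (take j p') \<subseteq> L" using SL by blast
      then have mj: "is_matching (A (arrived \<sigma> j))" using arrj match by simp
      have ej: "e \<in> A (set (take j p'))" "fst e = p'!(j-1)"
        using tent_some[OF j(4) mj] arrj j lp' unfolding \<sigma>_def p by (auto simp: nth_append)
      have "p'!(j-1) \<in> S - {u}" using p'P j lp' nth_mem[of "j-1" p']
        by (auto simp: permutations_of_set_def)
      then have f: "fst e \<noteq> u" using ej by auto
      have "p'!(j-1) \<notin> Bu u (set (take j p'))"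
        using p'G j lp' unfolding G_def goodp_def by auto
      then have "snd e \<noteq> ru u" using ej unfolding Bu_def
        by (metis prod.collapse mem_Collect_eq)
      then show "fst e \<noteq> fst (u, ru u) \<and> snd e \<noteq> snd (u, ru u)" using f by simp
    qed
    have "feasible A \<sigma> l" unfolding feasible_def using tent insert_matching[OF Mm Mprop] M_def by auto
    then show "p \<in> PF" using pP tent unfolding PF_def PC_def \<sigma>_def by auto
  qed
  have finG: "finite (G u)" for u
    by (rule finite_subset[of _ "permutations_of_set _"]) (auto simp: G_def goodp_def)
  have cardUN: "card (\<Union>u\<in>U. (\<lambda>q. q @ [u]) ` G u) = (\<Sum>u\<in>U. card (G u))"
    apply (subst card_UN_disjoint[OF finU])
      apply (auto simp: finG)[2]
    apply (rule sum.cong, simp)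
    apply (rule card_image)
    apply (auto simp: inj_on_def)
    done
  have finPF: "finite PF" unfolding PF_def PC_def
    by (rule finite_subset[of _ "permutations_of_set S"]) auto
  have cG: "real (card (G u)) \<ge> (real s - 1) / (real l - 1) * fact (l - 1)" if "u \<in> U" for u
  proof -
    have uS: "u \<in> S" using that U_def by auto
    have uniq: "\<And>Y a b. Y \<subseteq> S - {u} \<Longrightarrow> a \<in> Bu u Y \<Longrightarrow> b \<in> Bu u Y \<Longrightarrow> a = b"
    proof -
      fix Y a b assume Y: "Y \<subseteq> S - {u}" and ab: "a \<in> Bu u Y" "b \<in> Bu u Y"
      have "Y \<subseteq> L" using Y SL by blast
      then have m: "is_matching (A Y)" by (rule match)
      have a: "(a, ru u) \<in> A Y" and b: "(b, ru u) \<in> A Y" using ab unfolding Bu_def by auto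
      show "a = b"
      proof (rule ccontr)
        assume "a \<noteq> b"
        then show False using bspec[OF bspec[OF m[unfolded is_matching_def] a] b] by simp
      qed
    qed
    have "s \<le> card (S - {u}) + 1" unfolding cSu[OF uS] using sl s_def l1 by linarith
    have fS: "finite (S - {u})" using finS by blast
    have "real (card (goodp s (Bu u) (S - {u}))) \<ge> (real s - 1) / real (card (S - {u})) * fact (card (S - {u}))"
      by (rule count_good[OF fS uniq \<open>s \<le> card (S - {u}) + 1\<close> s1])
    then show ?thesis unfolding G_def cSu[OF uS] l1r .
  qed
  define c where "c = (real s - 1) / (real l - 1)"
  have X: "real (card (\<Union>u\<in>U. (\<lambda>q. q @ [u]) ` G u)) \<le> real (card PF)"
  proof -
    have "(\<Union>u\<in>U. (\<lambda>q. q @ [u]) ` G u) \<subseteq> PF" using GPF by blast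
    then show ?thesis using card_mono[OF finPF] by simp
  qed
  have Y: "(\<Sum>u\<in>U. c * fact (l - 1)) \<le> real (card (\<Union>u\<in>U. (\<lambda>q. q @ [u]) ` G u))"
    unfolding cardUN of_nat_sum c_def by (rule sum_mono) (rule cG)
  have Z: "(\<Sum>u\<in>U. c * fact (l - 1)) = real (card U) * (c * fact (l - 1))"
    by (rule sum_constant)
  have W: "c * real (card PC) \<le> c * (real (card U) * fact (l - 1))"
  proof (rule mult_left_mono)
    have "real (card PC) \<le> real (card U * fact (l - 1))" using cPC by (simp only: of_nat_le_iff)
    then show "real (card PC) \<le> real (card U) * fact (l - 1)" by simp
    have "1 \<le> real s" "1 \<le> real l" using s1 l1 by simp_all
    then show "0 \<le> c" unfolding c_def by (intro divide_nonneg_nonneg) simp_all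
  qed
  have "c * (real (card U) * fact (l - 1)) = real (card U) * (c * fact (l - 1))" by (simp only: mult_ac)
  then have "c * real (card PC) \<le> real (card PF)" using W X Y Z by linarith
  then show ?thesis unfolding c_def s_def .
qed

theorem mainTheorem12:
  fixes L :: "'l set" and R :: "'r set" and E :: "('l \<times> 'r) set"
    and A :: "'l set \<Rightarrow> ('l \<times> 'r) set"
    and n l :: nat and S :: "'l set" and T :: "('l \<times> 'r) set"
  defines "\<Omega> \<equiv> pmf_of_set (permutations_of_set L)"
  defines "C \<equiv> {\<sigma>. arrived \<sigma> l = S \<and> tentative_from A \<sigma> (l + 1) = T
                     \<and> tentative A \<sigma> l \<noteq> None}"
  assumes "finite L" and "card L = n" and "finite R" and "E \<subseteq> L \<times> R"
    and "\<And>L'. L' \<subseteq> L \<Longrightarrow> is_matching (A L') \<and> A L' \<subseteq> E \<inter> (L' \<times> R)"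
    and "start_round n \<le> l" and "1 \<le> l" and "l \<le> n"
    and "measure_pmf.prob \<Omega> C > 0"
  shows "measure_pmf.prob \<Omega> ({\<sigma>. feasible A \<sigma> l} \<inter> C) / measure_pmf.prob \<Omega> C
           \<ge> (real n / 2 - 1) / (real l - 1)"
proof -
  note finL = assms(3) and cL = assms(4) and sl = assms(8) and l1 = assms(9) and ln = assms(10)
  have match: "\<And>L'. L' \<subseteq> L \<Longrightarrow> is_matching (A L')" using assms(7) by blast
  define P where "P = permutations_of_set L"
  have finP: "finite P" and neP: "P \<noteq> {}" using finL by (auto simp: P_def)
  have prob: "measure_pmf.prob \<Omega> X = real (card (P \<inter> X)) / real (card P)" for X
    unfolding \<Omega>_def P_def[symmetric] by (rule measure_pmf_of_set[OF neP finP])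
  have cP: "card P > 0" using finP neP by (simp add: card_gt_0_iff)
  have "P \<inter> C \<noteq> {}" using assms(11) prob[of C] by auto
  then obtain \<sigma>0 where s0P: "\<sigma>0 \<in> P" and s0C: "\<sigma>0 \<in> C" by blast
  have ls0: "length \<sigma>0 = n" using s0P cL by (simp add: P_def length_finite_permutations_of_set)
  define p0 where "p0 = take l \<sigma>0"
  define q0 where "q0 = drop l \<sigma>0"
  have lp0: "length p0 = l" using ls0 ln p0_def by simp
  have Sdef: "S = set p0" using s0C p0_def by (simp add: C_def arrived_def)
  have dp0: "distinct p0" using s0P p0_def by (simp add: P_def permutations_of_set_def)
  have cS: "card S = l" using Sdef dp0 lp0 distinct_card by blast
  have SL: "S \<subseteq> L" using s0P Sdef p0_def set_take_subset by (fastforce simp: P_def permutations_of_set_def)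
  have finS: "finite S" using Sdef by simp
  have lq0: "l + length q0 = n" using ls0 ln q0_def by simp
  have lenQ: "length q = n - l" if "q \<in> permutations_of_set (L - S)" for q
    using that length_finite_permutations_of_set[OF that] card_Diff_subset[OF finS SL] cL cS by simp
  define PC where "PC = {p \<in> permutations_of_set S. tentative A (p@q0) l \<noteq> None}"
  define PF where "PF = {p \<in> PC. feasible A (p@q0) l}"
  define Q where "Q = {q \<in> permutations_of_set (L - S). tentative_from A (p0@q) (l+1) = T}"
  have split: "take l \<sigma> \<in> permutations_of_set S \<and> drop l \<sigma> \<in> permutations_of_set (L - S)
      \<and> length (take l \<sigma>) = l" if "\<sigma> \<in> P" "arrived \<sigma> l = S" for \<sigma>
  proof -
    have d: "distinct \<sigma>" "set \<sigma> = L" using that by (auto simp: P_def permutations_of_set_def)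
    have ls: "length \<sigma> = n" using that cL by (simp add: P_def length_finite_permutations_of_set)
    have st: "set (take l \<sigma>) = S" using that by (simp add: arrived_def)
    have dd: "distinct (take l \<sigma> @ drop l \<sigma>)" using d by simp
    then have "set (take l \<sigma>) \<inter> set (drop l \<sigma>) = {}" "distinct (take l \<sigma>)" "distinct (drop l \<sigma>)"
      by (simp_all only: distinct_append)
    moreover have "set (take l \<sigma>) \<union> set (drop l \<sigma>) = L" using d
      by (metis append_take_drop_id set_append)
    ultimately show ?thesis using st ls ln by (auto simp: permutations_of_set_def)
  qed
  have comb: "p @ q \<in> P \<and> arrived (p@q) l = S" if "p \<in> permutations_of_set S" "q \<in> permutations_of_set (L - S)" for p q
  proof -
    have "length p = l" using that cS by (simp add: length_finite_permutations_of_set)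
    then show ?thesis using that SL by (auto simp: P_def permutations_of_set_def arrived_def)
  qed
  have lenp: "length p = l" if "p \<in> permutations_of_set S" for p
    using that cS by (simp add: length_finite_permutations_of_set)
  define f where "f = (\<lambda>(p::'l list, q::'l list). p @ q)"
  have img: "P \<inter> C = f ` (PC \<times> Q) \<and> P \<inter> ({\<sigma>. feasible A \<sigma> l} \<inter> C) = f ` (PF \<times> Q)"
  proof -
    have A1: "take l \<sigma> \<in> PC \<and> drop l \<sigma> \<in> Q \<and> (feasible A \<sigma> l \<longleftrightarrow> take l \<sigma> \<in> PF)"
      if "\<sigma> \<in> P" "\<sigma> \<in> C" for \<sigma>
    proof -
      have ar: "arrived \<sigma> l = S" using that C_def by simp
      note sp = split[OF that(1) ar]
      have e: "\<sigma> = take l \<sigma> @ drop l \<sigma>" by simp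
      have t1: "tentative A (take l \<sigma> @ drop l \<sigma>) l = tentative A (take l \<sigma> @ q0) l"
        by (rule tent_prefix) (use sp l1 in auto)
      have t2: "tentative_from A (take l \<sigma> @ drop l \<sigma>) (length (take l \<sigma>) + 1)
          = tentative_from A (p0 @ drop l \<sigma>) (length (take l \<sigma>) + 1)"
        by (rule tfrom_suffix) (use sp lp0 Sdef in \<open>auto simp: permutations_of_set_def\<close>)
      have f1: "feasible A (take l \<sigma> @ drop l \<sigma>) l = feasible A (take l \<sigma> @ q0) l"
      proof (rule feas_prefix)
        have "length (drop l \<sigma>) = n - l" using sp lenQ by blast
        then show "length (drop l \<sigma>) = length q0" using lq0 by simp
      qed (use sp l1 in auto)
      show ?thesis using that sp t1 t2 f1 e
        unfolding PC_def PF_def Q_def C_def by auto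
    qed
    have A2: "p @ q \<in> P \<and> p @ q \<in> C \<and> (feasible A (p@q) l \<longleftrightarrow> p \<in> PF)"
      if "p \<in> PC" "q \<in> Q" for p q
    proof -
      have pS: "p \<in> permutations_of_set S" and qS: "q \<in> permutations_of_set (L - S)"
        using that PC_def Q_def by auto
      note cb = comb[OF pS qS]
      have t1: "tentative A (p @ q) l = tentative A (p @ q0) l"
        by (rule tent_prefix) (use lenp[OF pS] l1 in auto)
      have t2: "tentative_from A (p @ q) (length p + 1) = tentative_from A (p0 @ q) (length p + 1)"
        by (rule tfrom_suffix) (use lenp[OF pS] lp0 Sdef pS in \<open>auto simp: permutations_of_set_def\<close>)
      have f1: "feasible A (p @ q) l = feasible A (p @ q0) l"
        by (rule feas_prefix) (use lenp[OF pS] l1 lenQ[OF qS] lq0 in auto)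
      show ?thesis using that cb t1 t2 f1 lenp[OF pS]
        unfolding PC_def PF_def Q_def C_def by auto
    qed
    have "P \<inter> C \<subseteq> f ` (PC \<times> Q)"
    proof
      fix \<sigma> assume "\<sigma> \<in> P \<inter> C"
      then show "\<sigma> \<in> f ` (PC \<times> Q)" using A1[of \<sigma>] unfolding f_def
        by (auto intro!: image_eqI[of _ _ "(take l \<sigma>, drop l \<sigma>)"])
    qed
    moreover have "f ` (PC \<times> Q) \<subseteq> P \<inter> C" using A2 unfolding f_def by auto
    moreover have "P \<inter> ({\<sigma>. feasible A \<sigma> l} \<inter> C) \<subseteq> f ` (PF \<times> Q)"
    proof
      fix \<sigma> assume "\<sigma> \<in> P \<inter> ({\<sigma>. feasible A \<sigma> l} \<inter> C)"
      then show "\<sigma> \<in> f ` (PF \<times> Q)" using A1[of \<sigma>] unfolding f_def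
        by (auto intro!: image_eqI[of _ _ "(take l \<sigma>, drop l \<sigma>)"])
    qed
    moreover have "f ` (PF \<times> Q) \<subseteq> P \<inter> ({\<sigma>. feasible A \<sigma> l} \<inter> C)"
      using A2 unfolding f_def PF_def by auto
    ultimately show ?thesis by blast
  qed
  have inj: "inj_on f (PC \<times> Q)"
  proof (rule inj_onI)
    fix x y assume "x \<in> PC \<times> Q" "y \<in> PC \<times> Q" "f x = f y"
    moreover then have "length (fst x) = length (fst y)" using lenp unfolding PC_def by auto
    ultimately show "x = y" unfolding f_def by (auto simp: append_eq_append_conv split: prod.splits)
  qed
  have PFPC: "PF \<subseteq> PC" unfolding PF_def by auto
  have finPC: "finite PC" unfolding PC_def by (rule finite_subset[of _ "permutations_of_set S"]) auto
  have finQ: "finite Q" unfolding Q_def by (rule finite_subset[of _ "permutations_of_set (L - S)"]) auto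
  have c1: "card (P \<inter> C) = card PC * card Q"
    using img card_image[OF inj] by (simp add: card_cartesian_product)
  have c2: "card (P \<inter> ({\<sigma>. feasible A \<sigma> l} \<inter> C)) = card PF * card Q"
  proof -
    have "PF \<times> Q \<subseteq> PC \<times> Q" using PFPC by blast
    then have "card (f ` (PF \<times> Q)) = card (PF \<times> Q)" by (rule card_image[OF inj_on_subset[OF inj]])
    then show ?thesis using img by (simp add: card_cartesian_product)
  qed
  have "card (P \<inter> C) > 0" using \<open>P \<inter> C \<noteq> {}\<close> finP by (simp add: card_gt_0_iff)
  then have pos: "card PC > 0" "card Q > 0" using c1 by auto
  have ratio: "measure_pmf.prob \<Omega> ({\<sigma>. feasible A \<sigma> l} \<inter> C) / measure_pmf.prob \<Omega> C
      = real (card PF) / real (card PC)"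
    unfolding prob c1 c2 using pos cP by (simp add: field_simps)
  have pb: "real (card PF) \<ge> (real (start_round n) - 1) / (real l - 1) * real (card PC)"
    unfolding PF_def PC_def by (rule prefix_bound[OF finL SL cS l1 sl lq0 match])
  have b1: "real (card PF) / real (card PC) \<ge> (real (start_round n) - 1) / (real l - 1)"
    using pb pos by (simp add: pos_le_divide_eq)
  have sn: "real (start_round n) \<ge> real n / 2"
    unfolding start_round_def by linarith
  have b2: "(real n / 2 - 1) / (real l - 1) \<le> (real (start_round n) - 1) / (real l - 1)"
  proof (cases "l = 1")
    case True then show ?thesis by simp
  next
    case False
    then have "real l - 1 > 0" using l1 by simp
    then show ?thesis using sn by (intro divide_right_mono) auto
  qed
  show ?thesis unfolding ratio using b1 b2 by linarith
qed

end
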